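(* Let $\mathcal{A}$ be a subring of the algebraic integers which is closed under complex conjugation. Let $\{\mathcal{W}_i\}_{i=1}^n$ be an equiisoclinic tight fusion frame consisting of $n$ subspaces of dimension $m$ of $\mathbb{F}^k$ ($\mathbb{F}=\mathbb{R}$ or $\mathbb{C}$). For each $i\in[n]$ fix an orthonormal basis of $\mathcal{W}_i$ and let $L_i$ be the $k\times m$ matrix with these basis vectors as columns. If for all $i\in[n]$ the entries of $\sqrt{k}L_i$ lie in $\mathcal{A}$, then \[ \frac{k(mn-k)}{n-1}\in\mathbb{Z}. \]
   Context: The algebraic integers are the complex roots of monic polynomials with integer coefficients. A collection of $m$-dimensional subspaces $\{\mathcal{W}_i\}_{i=1}^n$ of $\mathbb{F}^k$ with orthogonal projections $P_i=L_iL_i^*$ is a tight fusion frame if $\sum_iP_i=AI_k$ for some $A>0$. It is equiisoclinic if there is $\alpha>0$ with $L_i^*L_jL_j^*L_i=\alpha I_m$ for all $i\ne j$ (this does not depend on the choice of orthonormal bases). *)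

theory Defs
  imports "HOL-Computational_Algebra.Polynomial" Complex_Main
begin

text \<open>Matrices are represented as functions nat => nat => complex, with explicit
  dimension bounds. The family (L i) for i < n consists of k x m matrices.\<close>

definition conj_closed_alg_int_subring :: "complex set \<Rightarrow> bool" where
  "conj_closed_alg_int_subring R \<longleftrightarrow>
     R \<subseteq> {z. algebraic_int z} \<and> 1 \<in> R \<and>
     (\<forall>x\<in>R. \<forall>y\<in>R. x + y \<in> R \<and> x * y \<in> R) \<and> (\<forall>x\<in>R. - x \<in> R) \<and>
     (\<forall>x\<in>R. cnj x \<in> R)"

definition adj_mult :: "nat \<Rightarrow> (nat \<Rightarrow> nat \<Rightarrow> complex) \<Rightarrow> (nat \<Rightarrow> nat \<Rightarrow> complex) \<Rightarrow> nat \<Rightarrow> nat \<Rightarrow> complex" where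
  "adj_mult k L M a b = (\<Sum>r<k. cnj (L r a) * M r b)"

definition orthonormal_cols :: "nat \<Rightarrow> nat \<Rightarrow> (nat \<Rightarrow> nat \<Rightarrow> complex) \<Rightarrow> bool" where
  "orthonormal_cols k m L \<longleftrightarrow>
     (\<forall>a<m. \<forall>b<m. adj_mult k L L a b = (if a = b then 1 else 0))"

definition tight_fusion_frame :: "nat \<Rightarrow> nat \<Rightarrow> nat \<Rightarrow> (nat \<Rightarrow> nat \<Rightarrow> nat \<Rightarrow> complex) \<Rightarrow> bool" where
  "tight_fusion_frame n k m L \<longleftrightarrow>
     (\<exists>A::real. A > 0 \<and> (\<forall>r<k. \<forall>s<k.
        (\<Sum>i<n. \<Sum>c<m. L i r c * cnj (L i s c)) = (if r = s then complex_of_real A else 0)))"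

definition equiisoclinic :: "nat \<Rightarrow> nat \<Rightarrow> nat \<Rightarrow> (nat \<Rightarrow> nat \<Rightarrow> nat \<Rightarrow> complex) \<Rightarrow> bool" where
  "equiisoclinic n k m L \<longleftrightarrow>
     (\<exists>\<alpha>::real. \<alpha> > 0 \<and> (\<forall>i<n. \<forall>j<n. i \<noteq> j \<longrightarrow> (\<forall>a<m. \<forall>b<m.
        (\<Sum>c<m. adj_mult k (L i) (L j) a c * adj_mult k (L j) (L i) c b)
          = (if a = b then complex_of_real \<alpha> else 0))))"

end

theory Submission
  imports Defs
begin

lemma R_sum:
  assumes "conj_closed_alg_int_subring R" and "finite S" and "\<And>x. x \<in> S \<Longrightarrow> f x \<in> R"
  shows "sum f S \<in> R"
  using assms(2,3)
proof (induction S rule: finite_induct)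
  case empty
  have "1 \<in> R" "- 1 \<in> R" using assms(1) unfolding conj_closed_alg_int_subring_def by auto
  then have "1 + - 1 \<in> R" using assms(1) unfolding conj_closed_alg_int_subring_def by blast
  then show ?case by simp
next
  case (insert x F)
  then show ?case using assms(1) unfolding conj_closed_alg_int_subring_def by simp
qed

lemma swap4: "(\<Sum>j\<in>J. \<Sum>c\<in>C. \<Sum>r\<in>K. \<Sum>s\<in>S. f j c r s) = (\<Sum>r\<in>K. \<Sum>s\<in>S. \<Sum>j\<in>J. \<Sum>c\<in>C. (f j c r s::'a::comm_monoid_add))"
proof -
  have "(\<Sum>j\<in>J. \<Sum>c\<in>C. \<Sum>r\<in>K. \<Sum>s\<in>S. f j c r s) = (\<Sum>j\<in>J. \<Sum>r\<in>K. \<Sum>s\<in>S. \<Sum>c\<in>C. f j c r s)"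
  proof (rule sum.cong[OF refl])
    fix j
    have "(\<Sum>c\<in>C. \<Sum>r\<in>K. \<Sum>s\<in>S. f j c r s) = (\<Sum>r\<in>K. \<Sum>c\<in>C. \<Sum>s\<in>S. f j c r s)" by (rule sum.swap)
    also have "\<dots> = (\<Sum>r\<in>K. \<Sum>s\<in>S. \<Sum>c\<in>C. f j c r s)" by (rule sum.cong[OF refl], rule sum.swap)
    finally show "(\<Sum>c\<in>C. \<Sum>r\<in>K. \<Sum>s\<in>S. f j c r s) = (\<Sum>r\<in>K. \<Sum>s\<in>S. \<Sum>c\<in>C. f j c r s)" .
  qed
  also have "\<dots> = (\<Sum>r\<in>K. \<Sum>j\<in>J. \<Sum>s\<in>S. \<Sum>c\<in>C. f j c r s)" by (rule sum.swap)
  also have "\<dots> = (\<Sum>r\<in>K. \<Sum>s\<in>S. \<Sum>j\<in>J. \<Sum>c\<in>C. f j c r s)" by (rule sum.cong[OF refl], rule sum.swap)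
  finally show ?thesis .
qed

lemma swap3: "(\<Sum>r\<in>K. \<Sum>j\<in>J. \<Sum>c\<in>C. f r j c) = (\<Sum>j\<in>J. \<Sum>c\<in>C. \<Sum>r\<in>K. (f r j c::'a::comm_monoid_add))"
proof -
  have "(\<Sum>r\<in>K. \<Sum>j\<in>J. \<Sum>c\<in>C. f r j c) = (\<Sum>j\<in>J. \<Sum>r\<in>K. \<Sum>c\<in>C. f r j c)" by (rule sum.swap)
  also have "\<dots> = (\<Sum>j\<in>J. \<Sum>c\<in>C. \<Sum>r\<in>K. f r j c)" by (rule sum.cong[OF refl], rule sum.swap)
  finally show ?thesis .
qed

lemma key_sum:
  fixes L :: "nat \<Rightarrow> nat \<Rightarrow> nat \<Rightarrow> complex"
  assumes F: "\<forall>r<k. \<forall>s<k. (\<Sum>i<n. \<Sum>c<m. L i r c * cnj (L i s c)) = (if r = s then A else 0)"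
  shows "(\<Sum>j<n. \<Sum>c<m. adj_mult k (L i) (L j) a c * adj_mult k (L j) (L i) c a)
     = A * adj_mult k (L i) (L i) a a"
proof -
  have "(\<Sum>j<n. \<Sum>c<m. adj_mult k (L i) (L j) a c * adj_mult k (L j) (L i) c a)
    = (\<Sum>j<n. \<Sum>c<m. \<Sum>r<k. \<Sum>s<k. cnj (L i r a) * L i s a * (L j r c * cnj (L j s c)))"
    unfolding adj_mult_def sum_product
    by (intro sum.cong refl) (simp add: algebra_simps)
  also have "\<dots> = (\<Sum>r<k. \<Sum>s<k. cnj (L i r a) * L i s a * (\<Sum>j<n. \<Sum>c<m. L j r c * cnj (L j s c)))"
    unfolding sum_distrib_left by (rule swap4)
  also have "\<dots> = (\<Sum>r<k. \<Sum>s<k. cnj (L i r a) * L i s a * (if r = s then A else 0))"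
    using F by (intro sum.cong refl) simp
  also have "\<dots> = (\<Sum>r<k. cnj (L i r a) * L i r a * A)"
    by (simp add: if_distrib sum.delta cong: if_cong)
  also have "\<dots> = A * adj_mult k (L i) (L i) a a"
    unfolding adj_mult_def by (simp add: sum_distrib_left algebra_simps)
  finally show ?thesis .
qed

theorem mainTheorem4:
  fixes R :: "complex set" and n k m :: nat and L :: "nat \<Rightarrow> nat \<Rightarrow> nat \<Rightarrow> complex"
  assumes "conj_closed_alg_int_subring R"
    and "\<forall>i<n. orthonormal_cols k m (L i)"
    and "tight_fusion_frame n k m L"
    and "equiisoclinic n k m L"
    and "\<forall>i<n. \<forall>r<k. \<forall>c<m. complex_of_real (sqrt (real k)) * L i r c \<in> R"
  shows "real k * (real m * real n - real k) / (real n - 1) \<in> \<int>"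
proof (cases "n \<ge> 2 \<and> k \<ge> 1")
  case False
  then consider "n = 0" | "n = 1" | "k = 0" by linarith
  then show ?thesis
  proof cases
    case 1
    have "real k * (real m * real n - real k) / (real n - 1) = of_nat (k * k)" using 1 by simp
    then show ?thesis by (metis Ints_of_nat)
  qed simp_all
next
  case True
  hence n2: "n \<ge> 2" and k1: "k \<ge> 1" by auto
  obtain A :: real where A: "A > 0" and F: "\<forall>r<k. \<forall>s<k.
        (\<Sum>i<n. \<Sum>c<m. L i r c * cnj (L i s c)) = (if r = s then complex_of_real A else 0)"
    using assms(3) unfolding tight_fusion_frame_def by blast
  obtain \<alpha> :: real where E: "\<forall>i<n. \<forall>j<n. i \<noteq> j \<longrightarrow> (\<forall>a<m. \<forall>b<m.
        (\<Sum>c<m. adj_mult k (L i) (L j) a c * adj_mult k (L j) (L i) c b)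
          = (if a = b then complex_of_real \<alpha> else 0))"
    using assms(4) unfolding equiisoclinic_def by blast
  have ON: "\<And>i a b. i < n \<Longrightarrow> a < m \<Longrightarrow> b < m \<Longrightarrow> adj_mult k (L i) (L i) a b = (if a = b then 1 else 0)"
    using assms(2) unfolding orthonormal_cols_def by blast
  have "(\<Sum>r<k. \<Sum>i<n. \<Sum>c<m. L i r c * cnj (L i r c)) = (\<Sum>r<k. complex_of_real A)"
    using F by (intro sum.cong refl) simp
  also have "\<dots> = of_nat k * complex_of_real A" by simp
  finally have t1: "(\<Sum>r<k. \<Sum>i<n. \<Sum>c<m. L i r c * cnj (L i r c)) = of_nat k * complex_of_real A" .
  have "(\<Sum>r<k. \<Sum>i<n. \<Sum>c<m. L i r c * cnj (L i r c)) = (\<Sum>i<n. \<Sum>c<m. adj_mult k (L i) (L i) c c)"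
    unfolding adj_mult_def by (rule trans[OF swap3]) (simp add: mult.commute)
  also have "\<dots> = (\<Sum>i<n. \<Sum>c<m. (1::complex))"
    using ON by (intro sum.cong refl) simp
  also have "\<dots> = of_nat n * of_nat m" by simp
  finally have "of_nat k * complex_of_real A = of_nat n * of_nat m" using t1 by simp
  hence "complex_of_real (real k * A) = complex_of_real (real n * real m)" by simp
  hence kA: "real k * A = real n * real m" by (simp only: of_real_eq_iff)
  have m1: "m \<ge> 1"
  proof (rule ccontr)
    assume "\<not> m \<ge> 1" hence "m = 0" by simp
    with kA A k1 show False by simp
  qed
  have ks: "(\<Sum>j<n. \<Sum>c<m. adj_mult k (L 0) (L j) 0 c * adj_mult k (L j) (L 0) c 0)
     = complex_of_real A * adj_mult k (L 0) (L 0) 0 0"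
    by (rule key_sum) (use F in auto)
  have "{..<n} = insert 0 {1..<n}" using n2 by auto
  hence "(\<Sum>j<n. \<Sum>c<m. adj_mult k (L 0) (L j) 0 c * adj_mult k (L j) (L 0) c 0)
     = (\<Sum>c<m. adj_mult k (L 0) (L 0) 0 c * adj_mult k (L 0) (L 0) c 0)
       + (\<Sum>j\<in>{1..<n}. \<Sum>c<m. adj_mult k (L 0) (L j) 0 c * adj_mult k (L j) (L 0) c 0)"
    by simp
  also have "(\<Sum>c<m. adj_mult k (L 0) (L 0) 0 c * adj_mult k (L 0) (L 0) c 0)
      = (\<Sum>c<m. (if c = 0 then 1 else 0))"
    using ON n2 m1 by (intro sum.cong refl) auto
  also have "\<dots> = 1" using m1 by simp
  also have "(\<Sum>j\<in>{1..<n}. \<Sum>c<m. adj_mult k (L 0) (L j) 0 c * adj_mult k (L j) (L 0) c 0)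
      = (\<Sum>j\<in>{1..<n}. complex_of_real \<alpha>)"
    using E n2 m1 by (intro sum.cong refl) auto
  also have "\<dots> = of_nat (n - 1) * complex_of_real \<alpha>" by simp
  finally have "complex_of_real A = 1 + of_nat (n - 1) * complex_of_real \<alpha>"
    using ks ON[of 0 0 0] n2 m1 by simp
  hence "complex_of_real A = complex_of_real (1 + real (n - 1) * \<alpha>)" by simp
  hence Aa: "A = 1 + real (n - 1) * \<alpha>" by (simp only: of_real_eq_iff)
  have n1: "real n - 1 > 0" using n2 by simp
  have rn: "real (n - 1) = real n - 1" using n2 by simp
  have xeq: "real k * (real m * real n - real k) / (real n - 1) = real k * real k * \<alpha>"
  proof -
    have "real k * real k * \<alpha> * (real n - 1) = real k * (real k * A - real k)"
      unfolding Aa rn by (simp add: algebra_simps)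
    also have "\<dots> = real k * (real m * real n - real k)" using kA by (simp add: algebra_simps)
    finally show ?thesis using n1 by (simp add: field_simps)
  qed
  define s where "s = complex_of_real (sqrt (real k))"
  have "cnj s * s = complex_of_real (sqrt (real k) * sqrt (real k))" unfolding s_def
    by (simp only: complex_cnj_complex_of_real of_real_mult)
  also have "\<dots> = of_nat k" by simp
  finally have ss: "cnj s * s = of_nat k" .
  define M where "M i j a b = (\<Sum>r<k. cnj (s * L i r a) * (s * L j r b))" for i j a b
  have Meq: "M i j a b = of_nat k * adj_mult k (L i) (L j) a b" for i j a b
  proof -
    have "M i j a b = (\<Sum>r<k. (cnj s * s) * (cnj (L i r a) * L j r b))"
      unfolding M_def by (intro sum.cong refl) (simp add: algebra_simps)
    thus ?thesis unfolding adj_mult_def ss by (simp add: sum_distrib_left)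
  qed
  have RR: "\<And>x y. x \<in> R \<Longrightarrow> y \<in> R \<Longrightarrow> x * y \<in> R" "\<And>x. x \<in> R \<Longrightarrow> cnj x \<in> R"
    using assms(1) unfolding conj_closed_alg_int_subring_def by auto
  have Min: "M i j a b \<in> R" if "i < n" "j < n" "a < m" "b < m" for i j a b
    unfolding M_def
  proof (rule R_sum[OF assms(1)])
    fix r assume "r \<in> {..<k}"
    hence "s * L i r a \<in> R" "s * L j r b \<in> R" using that assms(5) unfolding s_def by auto
    thus "cnj (s * L i r a) * (s * L j r b) \<in> R" using RR by blast
  qed simp
  have "(\<Sum>c<m. M 0 1 0 c * M 1 0 c 0) \<in> R"
    by (rule R_sum[OF assms(1)]) (use Min RR n2 m1 in auto)
  moreover have "(\<Sum>c<m. M 0 1 0 c * M 1 0 c 0) = of_nat k * of_nat k * complex_of_real \<alpha>"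
  proof -
    have "(\<Sum>c<m. M 0 1 0 c * M 1 0 c 0) = of_nat k * of_nat k *
       (\<Sum>c<m. adj_mult k (L 0) (L 1) 0 c * adj_mult k (L 1) (L 0) c 0)"
      unfolding Meq by (simp add: sum_distrib_left algebra_simps)
    also have "\<dots> = of_nat k * of_nat k * complex_of_real \<alpha>" using E n2 m1 by simp
    finally show ?thesis .
  qed
  ultimately have "algebraic_int (complex_of_real (real k * real k * \<alpha>))"
    using assms(1) unfolding conj_closed_alg_int_subring_def by auto
  hence ai: "algebraic_int (real k * real k * \<alpha>)" by (simp only: algebraic_int_of_real_iff)
  have "real k * (real m * real n - real k) / (real n - 1) \<in> \<rat>" by simp
  with ai xeq show ?thesis using rational_algebraic_int_is_int by metis
qed

end
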